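(* Let $s,m$ be positive integers, $n=sm$, and let $k\geq 2$ be an integer. Let $F\in\mathbb{F}_{2^s}[x]$ be a polynomial which, viewed as a function $\mathbb{F}_{2^n}\to\mathbb{F}_{2^n}$, is differentially $(1,2k)$-uniform, i.e. $\delta_{F,1}=2k$. Suppose that $m$ is not divisible by any integer $t$ with $2\leq t\leq k$. Then for all $a,b\in\mathbb{F}_{2^s}$ with $a\neq 0$, the equation $F(x+a)+F(x)=b$ has no solution $x\in\mathbb{F}_{2^n}\setminus\mathbb{F}_{2^s}$.
   Context: For a function $F:\mathbb{F}_{p^n}\to\mathbb{F}_{p^n}$ and $c\in\mathbb{F}_{p^n}$, let ${}_c\Delta_F(a,b)=\#\{x\in\mathbb{F}_{p^n}: F(x+a)-cF(x)=b\}$, and the $c$-differential uniformity of $F$ is $\delta_{F,c}=\max\{{}_c\Delta_F(a,b): a,b\in\mathbb{F}_{p^n},\ a\neq 0 \text{ if } c=1\}$. $F$ is called differentially $(c,\delta)$-uniform if $\delta_{F,c}=\delta$. *)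

theory Defs
  imports "HOL-Computational_Algebra.Polynomial"
begin

definition cDelta :: "('a::{field,finite} \<Rightarrow> 'a) \<Rightarrow> 'a \<Rightarrow> 'a \<Rightarrow> 'a \<Rightarrow> nat" where
  "cDelta F c a b = card {x. F (x + a) - c * F x = b}"

definition c_diff_uniformity :: "('a::{field,finite} \<Rightarrow> 'a) \<Rightarrow> 'a \<Rightarrow> nat" where
  "c_diff_uniformity F c = Max {cDelta F c a b | a b. c = 1 \<longrightarrow> a \<noteq> 0}"

text \<open>The subfield GF(2^s) inside a finite field of order 2^n (s dividing n):
  the fixed points of the s-th power of Frobenius.\<close>
definition subfield_pow2 :: "nat \<Rightarrow> 'a::field set" where
  "subfield_pow2 s = {x. x ^ (2 ^ s) = x}"

end

theory Submission
  imports Defs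
begin

lemma fermat_fin:
  fixes x :: "'a::{field,finite}"
  shows "x ^ card (UNIV::'a set) = x"
proof (cases "x = 0")
  case True then show ?thesis by (simp add: zero_power finite_UNIV_card_ge_0)
next
  case False
  let ?U = "UNIV - {0::'a}"
  have fin: "finite ?U" by simp
  have bij: "bij_betw (\<lambda>y. x * y) ?U ?U"
    using False by (auto simp: bij_betw_def inj_on_def intro!: image_eqI[where x="y / x" for y])
  have "(\<Prod>y\<in>?U. x * y) = (\<Prod>y\<in>?U. y)"
    using prod.reindex_bij_betw[OF bij, of "\<lambda>y. y"] by simp
  moreover have "(\<Prod>y\<in>?U. x * y) = x ^ card ?U * (\<Prod>y\<in>?U. y)"
    by (simp add: prod.distrib)
  moreover have "(\<Prod>y\<in>?U. y) \<noteq> 0" by (simp add: prod_zero_iff)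
  ultimately have "x ^ card ?U = 1" by simp
  moreover have "card ?U = card (UNIV::'a set) - 1" by (simp add: card_Diff_singleton)
  moreover have "card (UNIV::'a set) \<ge> 1" by (simp add: Suc_le_eq finite_UNIV_card_ge_0)
  ultimately have "x ^ (card (UNIV::'a set) - 1) = 1" by simp
  moreover have "card (UNIV::'a set) = Suc (card (UNIV::'a set) - 1)"
    using \<open>card (UNIV::'a set) \<ge> 1\<close> by simp
  ultimately show ?thesis by (metis mult.right_neutral power_Suc)
qed

lemma char2:
  assumes "card (UNIV::'a::{field,finite} set) = 2 ^ n"
  shows "(2::'a) = 0"
proof -
  have bij: "bij_betw (\<lambda>y. y + 1) (UNIV::'a set) UNIV"
    by (auto simp: bij_betw_def inj_on_def intro!: image_eqI[where x="y - 1" for y])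
  have "(\<Sum>y\<in>(UNIV::'a set). y + 1) = (\<Sum>y\<in>UNIV. y)"
    using sum.reindex_bij_betw[OF bij, of "\<lambda>y. y"] by simp
  moreover have "(\<Sum>y\<in>(UNIV::'a set). y + 1) = (\<Sum>y\<in>UNIV. y) + of_nat (card (UNIV::'a set))"
    by (simp add: sum.distrib)
  ultimately have "(of_nat (card (UNIV::'a set)) :: 'a) = 0" by simp
  then have "(2::'a) ^ n = 0" using assms by simp
  then show ?thesis by simp
qed

lemma frob2:
  fixes u v :: "'a::field"
  assumes "(2::'a) = 0"
  shows "(u + v) ^ (2 ^ j) = u ^ (2 ^ j) + v ^ (2 ^ j)"
proof (induction j)
  case 0 then show ?case by simp
next
  case (Suc j)
  have e: "\<And>w::'a. w ^ (2 ^ Suc j) = (w ^ (2 ^ j))\<^sup>2"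
    by (simp add: power_mult[symmetric] mult.commute)
  show ?case unfolding e Suc power2_sum using assms by simp
qed

lemma frob_sum:
  fixes g :: "'b \<Rightarrow> 'a::field"
  assumes "(2::'a) = 0" "finite A"
  shows "(sum g A) ^ (2 ^ j) = (\<Sum>i\<in>A. (g i) ^ (2 ^ j))"
  using assms(2) by (induction A rule: finite_induct) (auto simp: frob2[OF assms(1)])

lemma frob_poly:
  fixes F :: "'a::field poly"
  assumes "(2::'a) = 0" "\<forall>i. coeff F i ^ (2 ^ j) = coeff F i"
  shows "poly F (y ^ (2 ^ j)) = (poly F y) ^ (2 ^ j)"
proof -
  have "(poly F y) ^ (2 ^ j) = (\<Sum>i\<le>degree F. (coeff F i * y ^ i) ^ (2 ^ j))"
    unfolding poly_altdef by (rule frob_sum[OF assms(1)]) simp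
  also have "\<dots> = (\<Sum>i\<le>degree F. coeff F i * (y ^ (2 ^ j)) ^ i)"
    using assms(2) by (simp add: power_mult_distrib power_mult[symmetric] mult.commute)
  finally show ?thesis by (simp add: poly_altdef)
qed

theorem proposition2p2:
  fixes F :: "'a::{field,finite} poly" and s m n k :: nat
  assumes "s > 0" and "m > 0" and "n = s * m"
    and "card (UNIV :: 'a set) = 2 ^ n"
    and "k \<ge> 2"
    and "\<forall>i. coeff F i \<in> subfield_pow2 s"
    and "c_diff_uniformity (poly F) 1 = 2 * k"
    and "\<forall>t. 2 \<le> t \<and> t \<le> k \<longrightarrow> \<not> t dvd m"
  shows "\<forall>a b x. a \<in> subfield_pow2 s \<and> b \<in> subfield_pow2 s \<and> a \<noteq> 0
           \<and> poly F (x + a) + poly F x = b \<longrightarrow> x \<in> subfield_pow2 s"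
proof (intro allI impI, rule ccontr)
  fix a b x :: 'a
  assume H: "a \<in> subfield_pow2 s \<and> b \<in> subfield_pow2 s \<and> a \<noteq> 0
           \<and> poly F (x + a) + poly F x = b"
  assume nx: "x \<notin> subfield_pow2 s"
  have two: "(2::'a) = 0" using char2 assms(4) by blast
  have aa: "a ^ (2^s) = a" and bb: "b ^ (2^s) = b" and a0: "a \<noteq> 0"
    and xs: "poly F (x + a) + poly F x = b"
    using H by (auto simp: subfield_pow2_def)
  have x1: "x ^ (2^s) \<noteq> x" using nx by (simp add: subfield_pow2_def)
  have cf: "\<forall>i. coeff F i ^ (2^s) = coeff F i" using assms(6) by (simp add: subfield_pow2_def)
  have minus: "\<And>u v::'a. u - v = u + v"
  proof -
    fix u v :: 'a
    have "v + v = 0" using two by (metis mult_2 mult_zero_left)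
    then have "-v = v" by (metis add_eq_0_iff2 minus_minus)
    then show "u - v = u + v" by (metis diff_conv_add_uminus)
  qed
  have aa2: "a + a = 0" using two by (metis mult_2 mult_zero_left)
  define S where "S = {y. poly F (y + a) - 1 * poly F y = b}"
  have xS: "x \<in> S" using xs by (simp add: S_def minus)
  have finS: "finite S" by simp
  have cardS: "card S \<le> 2 * k"
  proof -
    have cs: "card S = cDelta (poly F) 1 a b" by (simp add: S_def cDelta_def)
    have mem: "cDelta (poly F) 1 a b \<in> {cDelta (poly F) 1 a b | a b. (1::'a) = 1 \<longrightarrow> a \<noteq> 0}"
      using a0 by blast
    have fin: "finite {cDelta (poly F) 1 a b | a b. (1::'a) = 1 \<longrightarrow> a \<noteq> 0}"
    proof -
      have "{cDelta (poly F) 1 a b | a b. (1::'a) = 1 \<longrightarrow> a \<noteq> 0} \<subseteq> (\<lambda>(a,b). cDelta (poly F) 1 a b) ` UNIV"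
        by auto
      then show ?thesis by (rule finite_subset) simp
    qed
    have "cDelta (poly F) 1 a b \<le> c_diff_uniformity (poly F) 1"
      unfolding c_diff_uniformity_def by (rule Max_ge[OF fin mem])
    then show ?thesis using assms(7) cs by simp
  qed
  define Q where "Q = (2::nat)^s"
  have Qt: "\<And>t. Q ^ t = 2 ^ (s * t)" by (simp add: Q_def power_mult)
  have frobQ: "\<And>(u::'a) v t. (u + v) ^ (Q ^ t) = u ^ (Q ^ t) + v ^ (Q ^ t)"
    unfolding Qt using frob2[OF two] by blast
  have aQ: "\<And>t. a ^ (Q ^ t) = a"
  proof -
    fix t show "a ^ (Q ^ t) = a"
      by (induction t) (simp_all add: power_mult aa[folded Q_def] mult.commute[of Q])
  qed
  have closeQ: "\<And>y. y \<in> S \<Longrightarrow> y ^ Q \<in> S"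
  proof -
    fix y assume "y \<in> S"
    then have e: "poly F (y + a) + poly F y = b" by (simp add: S_def minus)
    have "poly F (y ^ Q + a) + poly F (y ^ Q) = poly F ((y + a) ^ Q) + poly F (y ^ Q)"
      using frobQ[of y a 1] aQ[of 1] by simp
    also have "\<dots> = (poly F (y + a)) ^ Q + (poly F y) ^ Q"
      unfolding Q_def using frob_poly[OF two cf] by simp
    also have "\<dots> = b ^ Q" using frobQ[of "poly F (y + a)" "poly F y" 1] e by simp
    also have "\<dots> = b" using bb by (simp add: Q_def)
    finally show "y ^ Q \<in> S" by (simp add: S_def minus)
  qed
  have closeA: "\<And>y. y \<in> S \<Longrightarrow> y + a \<in> S"
  proof -
    fix y assume "y \<in> S"
    then have e: "poly F (y + a) + poly F y = b" by (simp add: S_def minus)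
    have "y + a + a = y" by (simp add: add.assoc aa2)
    then have "poly F (y + a + a) + poly F (y + a) = b" using e by (simp only: add.commute)
    then show "y + a \<in> S" unfolding S_def mem_Collect_eq minus mult_1 .
  qed
  define f where "f i = x ^ (Q ^ i)" for i
  have fadd: "\<And>i j. f (i + j) = (f i) ^ (Q ^ j)"
    by (simp add: f_def power_add power_mult)
  have fS: "\<And>i. f i \<in> S"
  proof -
    fix i show "f i \<in> S"
    proof (induction i)
      case 0 then show ?case using xS by (simp add: f_def)
    next
      case (Suc i) then show ?case using closeQ fadd[of i 1] by simp
    qed
  qed
  have fm: "f m = x"
    using fermat_fin[of x] assms(3,4) by (simp add: f_def Qt)
  define d where "d = (LEAST d. 0 < d \<and> f d = x)"
  have dex: "0 < m \<and> f m = x" using fm assms(2) by simp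
  have d1: "0 < d \<and> f d = x" unfolding d_def by (rule LeastI[of _ m]) (rule dex)
  have d2: "\<And>e. 0 < e \<Longrightarrow> e < d \<Longrightarrow> f e \<noteq> x"
    unfolding d_def using not_less_Least by blast
  have fdq: "\<And>q. f (d * q) = x"
  proof -
    fix q show "f (d * q) = x"
    proof (induction q)
      case 0 then show ?case by (simp add: f_def)
    next
      case (Suc q)
      have "f (d * Suc q) = f (d * q + d)" by (simp add: add.commute)
      also have "\<dots> = x ^ (Q ^ d)" using fadd Suc by simp
      also have "\<dots> = x" using d1 by (simp add: f_def)
      finally show ?case .
    qed
  qed
  have fmod: "\<And>i. f i = f (i mod d)"
  proof -
    fix i
    have "f i = f (d * (i div d) + i mod d)" by simp
    also have "\<dots> = (f (d * (i div d))) ^ (Q ^ (i mod d))" by (rule fadd)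
    also have "\<dots> = f (i mod d)" using fdq by (simp add: f_def)
    finally show "f i = f (i mod d)" .
  qed
  have per: "\<And>i. f i = x \<Longrightarrow> d dvd i"
  proof -
    fix i assume "f i = x"
    then have "f (i mod d) = x" using fmod by simp
    moreover have "i mod d < d" using d1 by simp
    ultimately have "i mod d = 0" using d2 by blast
    then show "d dvd i" by auto
  qed
  have dm: "d dvd m" using per fm by simp
  have dge2: "d \<ge> 2"
  proof -
    have "f 1 \<noteq> x" using x1 by (simp add: f_def Q_def)
    then have "d \<noteq> 1" using d1 by auto
    then show ?thesis using d1 by linarith
  qed
  have dk: "d > k" using assms(8) dm dge2 by (meson not_le)
  have injf: "inj_on f {..<d}"
  proof (rule inj_onI, rule ccontr)
    fix i j assume i: "i \<in> {..<d}" and j: "j \<in> {..<d}" and e: "f i = f j" and ne: "i \<noteq> j"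
    have key: "\<And>i j. i < d \<Longrightarrow> j < d \<Longrightarrow> i < j \<Longrightarrow> f i = f j \<Longrightarrow> False"
    proof -
      fix i j assume "i < d" "j < d" "i < j" "f i = f j"
      then have "f (i + (d - j)) = f (j + (d - j))" using fadd by metis
      also have "\<dots> = x" using d1 \<open>j < d\<close> by simp
      moreover have "0 < i + (d - j)" "i + (d - j) < d" using \<open>i < j\<close> \<open>j < d\<close> by auto
      ultimately show False using d2[of "i + (d - j)"] by blast
    qed
    show False using key[of i j] key[of j i] i j e ne by (cases "i < j") auto
  qed
  have cardO: "card (f ` {..<d}) = d" using injf by (simp add: card_image)
  have OS: "f ` {..<d} \<subseteq> S" using fS by auto
  show False
  proof (cases "\<exists>i j. i < d \<and> j < d \<and> f i = f j + a")
    case True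
    then obtain i j where ij: "i < d" "j < d" "f i = f j + a" by blast
    have "f (i + (d - j)) = (f j + a) ^ (Q ^ (d - j))" by (simp only: fadd ij(3))
    also have "\<dots> = (f j) ^ (Q ^ (d - j)) + a" by (simp only: frobQ aQ)
    also have "\<dots> = f (j + (d - j)) + a" by (simp only: fadd)
    also have "\<dots> = x + a" using ij d1 by simp
    finally have "f (i + (d - j)) = x + a" .
    define r where "r = (i + (d - j)) mod d"
    have fr: "f r = x + a" using fmod \<open>f (i + (d - j)) = x + a\<close> r_def by metis
    have rd: "r < d" using d1 r_def by simp
    have r0: "r \<noteq> 0"
    proof
      assume "r = 0"
      then have "f r = x" by (simp add: f_def)
      then show False using fr a0 by simp
    qed
    have "f (r + r) = (x + a) ^ (Q ^ r)" using fadd fr by simp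
    also have "\<dots> = f r + a" using frobQ aQ by (simp add: f_def)
    also have "\<dots> = x" using fr aa2 by (simp add: add.assoc)
    finally have "d dvd (r + r)" using per by blast
    then obtain c where c: "r + r = d * c" by blast
    have "c = 1"
    proof -
      have "c < 2"
      proof (rule ccontr)
        assume "\<not> c < 2"
        then have "d * 2 \<le> d * c" by simp
        then show False using c rd by linarith
      qed
      moreover have "c \<noteq> 0"
      proof
        assume "c = 0"
        then show False using c r0 by simp
      qed
      ultimately show ?thesis by simp
    qed
    then have dr: "d = 2 * r" using c by simp
    then have "r dvd m" using dm by (metis dvd_mult_right)
    moreover have "r \<ge> 2" using dr dk assms(5) by linarith
    ultimately have "r > k" using assms(8) by (meson not_le)
    then have "card S \<ge> d" "d > 2 * k" using cardO OS card_mono[OF finS OS] dr by auto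
    then show False using cardS by linarith
  next
    case False
    have disj: "f ` {..<d} \<inter> (\<lambda>y. y + a) ` f ` {..<d} = {}" using False by auto
    have c2: "card ((\<lambda>y. y + a) ` f ` {..<d}) = d"
      using cardO by (simp add: card_image inj_on_def)
    have sub: "f ` {..<d} \<union> (\<lambda>y. y + a) ` f ` {..<d} \<subseteq> S" using OS closeA by auto
    have "card (f ` {..<d} \<union> (\<lambda>y. y + a) ` f ` {..<d}) = 2 * d"
      using card_Un_disjoint[OF _ _ disj] cardO c2 by simp
    then have "card S \<ge> 2 * d" using card_mono[OF finS sub] by simp
    then show False using cardS dk by linarith
  qed
qed

end
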